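(* Let $\mathcal{C}'\subset\mathbb{P}^2$ be a reduced curve and $L\subset\mathbb{P}^2$ a line with equation $\alpha_L=0$ that is not contained in $\mathcal{C}'$; let $\mathcal{C}=\mathcal{C}'\cup L$ and $\mathcal{C}''=\mathcal{C}'\cap L$. Then there is an exact sequence of $S$-modules $$0\to D(\mathcal{C}')\xrightarrow{\ \cdot\alpha_L\ } D(\mathcal{C})\xrightarrow{\ \rho\ } D(\mathcal{C}''),$$ where the first map is multiplication by $\alpha_L$ and $\rho$ is defined by reducing modulo $\alpha_L$, i.e. $\rho(\theta)$ is the derivation of $\overline{S}=S/(\alpha_L)$ induced by $\theta$.
   Context: $S=\mathbb{C}[x,y,z]$. For a reduced curve $\mathcal{C}$ defined by a reduced homogeneous $f_{\mathcal{C}}\in S$, $D(\mathcal{C})=\{\theta\in\mathrm{Der}(S):\theta(f_{\mathcal{C}})\in Sf_{\mathcal{C}}\}$. Any $\theta\in D(\mathcal{C})$ satisfies $\theta(\alpha_L)\in(\alpha_L)$, hence induces a derivation of $\overline{S}=S/(\alpha_L)$ (a polynomial ring in two variables, the homogeneous coordinate ring of $L\cong\mathbb{P}^1$). The finite set of points $\mathcal{C}''\subset L$ is defined in $\overline{S}$ by the reduced polynomial $\bar g$, the product of linear forms of $\overline{S}$ vanishing at the distinct points of $\mathcal{C}''$, and $D(\mathcal{C}'')=\{\eta\in\mathrm{Der}(\overline{S}):\eta(\bar g)\in\bar g\,\overline{S}\}$. *)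

theory Defs
  imports "HOL-Computational_Algebra.Polynomial" "HOL-Computational_Algebra.Squarefree"
begin

text \<open>S = C[x,y,z] realised as nested univariate polynomials: the outermost
  variable is z, then y, then x (innermost).\<close>
type_synonym S = "complex poly poly poly"

definition const3 :: "complex \<Rightarrow> S" where
  "const3 c = [:[:[:c:]:]:]"

definition varX :: S where "varX = [:[:[:0, 1:]:]:]"
definition varY :: S where "varY = [:[:0, 1:]:]"
definition varZ :: S where "varZ = [:0, 1:]"

definition coeff3 :: "S \<Rightarrow> nat \<Rightarrow> nat \<Rightarrow> nat \<Rightarrow> complex" where
  "coeff3 f i j k = coeff (coeff (coeff f k) j) i"

definition homogeneous3 :: "nat \<Rightarrow> S \<Rightarrow> bool" where
  "homogeneous3 d f \<longleftrightarrow> (\<forall>i j k. coeff3 f i j k \<noteq> 0 \<longrightarrow> i + j + k = d)"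

definition eval3 :: "S \<Rightarrow> complex \<times> complex \<times> complex \<Rightarrow> complex" where
  "eval3 f p = (case p of (x, y, z) \<Rightarrow> poly (poly (poly f [:[:z:]:]) [:y:]) x)"

definition dX :: "S \<Rightarrow> S" where "dX f = map_poly (map_poly pderiv) f"
definition dY :: "S \<Rightarrow> S" where "dY f = map_poly pderiv f"
definition dZ :: "S \<Rightarrow> S" where "dZ f = pderiv f"

text \<open>Der(S) is the free S-module on d/dx, d/dy, d/dz; a derivation is the triple
  of its values on x, y, z.\<close>
type_synonym der = "S \<times> S \<times> S"

definition der_apply :: "der \<Rightarrow> S \<Rightarrow> S" where
  "der_apply \<theta> f = (case \<theta> of (a, b, c) \<Rightarrow> a * dX f + b * dY f + c * dZ f)"

definition der_smult :: "S \<Rightarrow> der \<Rightarrow> der" where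
  "der_smult s \<theta> = (case \<theta> of (a, b, c) \<Rightarrow> (s * a, s * b, s * c))"

definition der_add :: "der \<Rightarrow> der \<Rightarrow> der" where
  "der_add \<theta> \<theta>' = (case \<theta> of (a, b, c) \<Rightarrow> case \<theta>' of (a', b', c') \<Rightarrow> (a + a', b + b', c + c'))"

definition reduced_curve_eq :: "S \<Rightarrow> bool" where
  "reduced_curve_eq f \<longleftrightarrow> (\<exists>d. d \<ge> 1 \<and> homogeneous3 d f) \<and> f \<noteq> 0 \<and> squarefree f"

definition DC :: "S \<Rightarrow> der set" where
  "DC f = {\<theta>. f dvd der_apply \<theta> f}"

definition linear_form :: "complex \<times> complex \<times> complex \<Rightarrow> S" where
  "linear_form v = (case v of (a, b, c) \<Rightarrow> const3 a * varX + const3 b * varY + const3 c * varZ)"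

definition quot :: "S \<Rightarrow> S \<Rightarrow> S set" where
  "quot \<alpha> h = {h + \<alpha> * k |k. True}"

definition Sbar :: "S \<Rightarrow> S set set" where
  "Sbar \<alpha> = range (quot \<alpha>)"

definition qplus :: "S set \<Rightarrow> S set \<Rightarrow> S set" where
  "qplus u v = {a + b |a b. a \<in> u \<and> b \<in> v}"

definition qtimes :: "S \<Rightarrow> S set \<Rightarrow> S set \<Rightarrow> S set" where
  "qtimes \<alpha> u v = {a * b + \<alpha> * k |a b k. a \<in> u \<and> b \<in> v}"

definition DerSbar :: "S \<Rightarrow> (S set \<Rightarrow> S set) set" where
  "DerSbar \<alpha> = {\<eta>. (\<forall>u\<in>Sbar \<alpha>. \<eta> u \<in> Sbar \<alpha>)
      \<and> (\<forall>u\<in>Sbar \<alpha>. \<forall>v\<in>Sbar \<alpha>. \<eta> (qplus u v) = qplus (\<eta> u) (\<eta> v))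
      \<and> (\<forall>u\<in>Sbar \<alpha>. \<forall>v\<in>Sbar \<alpha>.
            \<eta> (qtimes \<alpha> u v) = qplus (qtimes \<alpha> u (\<eta> v)) (qtimes \<alpha> (\<eta> u) v))
      \<and> (\<forall>c. \<eta> (quot \<alpha> (const3 c)) = quot \<alpha> 0)}"

definition DCpp :: "S \<Rightarrow> S \<Rightarrow> (S set \<Rightarrow> S set) set" where
  "DCpp \<alpha> g = {\<eta> \<in> DerSbar \<alpha>. \<exists>h. \<eta> (quot \<alpha> g) = quot \<alpha> (g * h)}"

definition rho :: "S \<Rightarrow> der \<Rightarrow> S set \<Rightarrow> S set" where
  "rho \<alpha> \<theta> u = quot \<alpha> (der_apply \<theta> (SOME h. u = quot \<alpha> h))"

definition nonzero3 :: "complex \<times> complex \<times> complex \<Rightarrow> bool" where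
  "nonzero3 p \<longleftrightarrow> p \<noteq> (0, 0, 0)"

definition proportional :: "complex \<times> complex \<times> complex \<Rightarrow> complex \<times> complex \<times> complex \<Rightarrow> bool" where
  "proportional p q \<longleftrightarrow> (\<exists>t. case q of (a, b, c) \<Rightarrow> p = (t * a, t * b, t * c))"

definition reduced_eq_of_intersection :: "S \<Rightarrow> S \<Rightarrow> S \<Rightarrow> bool" where
  "reduced_eq_of_intersection \<alpha> f' g \<longleftrightarrow>
     (\<exists>ps :: (complex \<times> complex \<times> complex) list. \<exists>ls :: (complex \<times> complex \<times> complex) list.
        length ls = length ps
      \<and> (\<forall>i<length ps. nonzero3 (ps ! i) \<and> eval3 \<alpha> (ps ! i) = 0 \<and> eval3 f' (ps ! i) = 0)
      \<and> (\<forall>i<length ps. \<forall>j<length ps. i \<noteq> j \<longrightarrow> \<not> proportional (ps ! i) (ps ! j))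
      \<and> (\<forall>p. nonzero3 p \<and> eval3 \<alpha> p = 0 \<and> eval3 f' p = 0 \<longrightarrow>
              (\<exists>i<length ps. proportional p (ps ! i)))
      \<and> (\<forall>i<length ps. \<not> \<alpha> dvd linear_form (ls ! i) \<and> eval3 (linear_form (ls ! i)) (ps ! i) = 0)
      \<and> g = (\<Prod>i<length ps. linear_form (ls ! i)))"

end

theory Submission imports Defs "HOL-Computational_Algebra.Polynomial_Factorial" "HOL-Computational_Algebra.Field_as_Ring" begin


lemma mp_add:
  assumes "f 0 = 0" "\<And>a b. f (a + b) = f a + f b"
  shows "map_poly f (p + q) = map_poly f p + map_poly f q"
  by (intro poly_eqI) (simp add: coeff_map_poly assms)

lemma mp_smult_der:
  assumes "D 0 = 0" "\<And>a b. D (a + b) = D a + D b" "\<And>a b. D (a * b) = a * D b + b * D a"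
  shows "map_poly D (smult c q) = smult c (map_poly D q) + smult (D c) q"
  by (intro poly_eqI) (simp add: coeff_map_poly assms mult.commute)

lemma mp_deriv:
  fixes D :: "'a::comm_ring_1 \<Rightarrow> 'a"
  assumes D0: "D 0 = 0" and Da: "\<And>a b. D (a + b) = D a + D b" and Dm: "\<And>a b. D (a * b) = a * D b + b * D a"
  shows "map_poly D (p * q) = p * map_poly D q + q * map_poly D p"
proof (induction p)
  case 0 then show ?case by simp
next
  case (pCons a p)
  have "map_poly D (pCons a p * q) = map_poly D (smult a q + pCons 0 (p * q))" by simp
  also have "\<dots> = smult a (map_poly D q) + smult (D a) q + pCons 0 (map_poly D (p * q))"
    by (simp add: mp_add[of D, OF D0 Da] mp_smult_der[OF D0 Da Dm] map_poly_pCons D0)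
  also have "\<dots> = pCons a p * map_poly D q + q * map_poly D (pCons a p)"
    by (simp add: pCons.IH map_poly_pCons D0 algebra_simps)
  finally show ?case .
qed

lemma mp_mult:
  fixes f :: "'a::comm_ring_1 \<Rightarrow> 'b::comm_ring_1"
  assumes f0: "f 0 = 0" and fa: "\<And>a b. f (a + b) = f a + f b" and fm: "\<And>a b. f (a * b) = f a * f b"
  shows "map_poly f (p * q) = map_poly f p * map_poly f q"
proof (induction p)
  case 0 then show ?case by simp
next
  case (pCons a p)
  have "map_poly f (pCons a p * q) = map_poly f (smult a q + pCons 0 (p * q))" by simp
  also have "\<dots> = smult (f a) (map_poly f q) + pCons 0 (map_poly f (p * q))"
    by (simp add: mp_add[of f, OF f0 fa] map_poly_smult f0 fm map_poly_pCons)
  also have "\<dots> = map_poly f (pCons a p) * map_poly f q"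
    by (simp add: pCons.IH map_poly_pCons f0)
  finally show ?case .
qed

lemma mpd_pCons [simp]: "map_poly pderiv (pCons a p) = pCons (pderiv a) (map_poly pderiv p)"
  by (simp add: map_poly_pCons)
lemma mmpd_pCons [simp]: "map_poly (map_poly pderiv) (pCons a p) = pCons (map_poly pderiv a) (map_poly (map_poly pderiv) p)"
  by (simp add: map_poly_pCons)
lemma mpd_1 [simp]: "map_poly pderiv (1 :: complex poly poly) = 0"
  by (simp add: map_poly_1)
lemma mpd_1' [simp]: "map_poly pderiv (1 :: S) = 0"
  by (simp add: map_poly_1)
lemma mmpd_1 [simp]: "map_poly (map_poly pderiv) (1 :: S) = 0"
  by (simp add: map_poly_1)
lemma dZ_add: "dZ (a + b) = dZ a + dZ b" by (simp add: dZ_def pderiv_add)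
lemma dZ_mult: "dZ (a * b) = a * dZ b + b * dZ a" by (simp add: dZ_def pderiv_mult)
lemma dY_add: "dY (a + b) = dY a + dY b" by (simp add: dY_def mp_add pderiv_add)
lemma dY_mult: "dY (a * b) = a * dY b + b * dY a"
  unfolding dY_def by (rule mp_deriv) (simp_all add: pderiv_add pderiv_mult)
lemma mpd_add: "map_poly pderiv (a + b) = map_poly pderiv a + map_poly pderiv (b :: complex poly poly)"
  by (simp add: mp_add pderiv_add)
lemma mpd_mult: "map_poly pderiv (a * b) = a * map_poly pderiv b + b * map_poly pderiv (a :: complex poly poly)"
  by (rule mp_deriv) (simp_all add: pderiv_add pderiv_mult)
lemma dX_add: "dX (a + b) = dX a + dX b" unfolding dX_def by (rule mp_add) (simp_all add: mpd_add)
lemma dX_mult: "dX (a * b) = a * dX b + b * dX a"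
  unfolding dX_def by (rule mp_deriv) (simp_all add: mpd_add mpd_mult)

lemma der_apply_add: "der_apply th (a + b) = der_apply th a + der_apply th b"
  by (cases th) (simp add: der_apply_def dX_add dY_add dZ_add algebra_simps)
lemma der_apply_mult: "der_apply th (a * b) = a * der_apply th b + b * der_apply th a"
  by (cases th) (simp add: der_apply_def dX_mult dY_mult dZ_mult algebra_simps)
lemma der_apply_0: "der_apply th 0 = 0"
  using der_apply_add[of th 0 0] by simp
lemma der_apply_uminus: "der_apply th (- a) = - der_apply th a"
proof -
  have "der_apply th a + der_apply th (- a) = 0" using der_apply_add[of th a "-a"] by (simp add: der_apply_0)
  then show ?thesis by (metis minus_unique)
qed
lemma der_apply_diff: "der_apply th (a - b) = der_apply th a - der_apply th b"
  using der_apply_add[of th a "-b"] by (simp add: der_apply_uminus)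
lemma der_apply_const: "der_apply th (const3 c) = 0"
  by (cases th) (simp add: der_apply_def const3_def dX_def dY_def dZ_def)
lemma der_apply_X: "der_apply th varX = fst th"
  by (cases th) (simp add: der_apply_def varX_def dX_def dY_def dZ_def pderiv_pCons pCons_one)
lemma der_apply_Y: "der_apply th varY = fst (snd th)"
  by (cases th) (simp add: der_apply_def varY_def dX_def dY_def dZ_def pderiv_pCons pCons_one)
lemma der_apply_Z: "der_apply th varZ = snd (snd th)"
  by (cases th) (simp add: der_apply_def varZ_def dX_def dY_def dZ_def pderiv_pCons pCons_one)
lemma der_apply_smult: "der_apply (der_smult s th) h = s * der_apply th h"
  by (cases th) (simp add: der_apply_def der_smult_def algebra_simps)
lemma der_apply_dadd: "der_apply (der_add th th') h = der_apply th h + der_apply th' h"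
  by (cases th, cases th') (simp add: der_apply_def der_add_def algebra_simps)

lemma quot_eq_iff: "quot al a = quot al b \<longleftrightarrow> al dvd (a - b)"
proof
  assume h: "quot al a = quot al b"
  have "a \<in> quot al a" unfolding quot_def by (auto intro: exI[of _ 0])
  then have "a \<in> quot al b" using h by simp
  then obtain k where "a = b + al * k" unfolding quot_def by auto
  then show "al dvd (a - b)" by simp
next
  assume "al dvd (a - b)"
  then obtain c where c: "a - b = al * c" by (auto elim: dvdE)
  show "quot al a = quot al b"
  proof (intro set_eqI iffI)
    fix x assume "x \<in> quot al a"
    then obtain k where "x = a + al * k" unfolding quot_def by auto
    then have "x = b + al * (c + k)" using c by (simp add: algebra_simps)
    then show "x \<in> quot al b" unfolding quot_def by auto
  next
    fix x assume "x \<in> quot al b"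
    then obtain k where "x = b + al * k" unfolding quot_def by auto
    then have "x = a + al * (k - c)" using c by (simp add: algebra_simps)
    then show "x \<in> quot al a" unfolding quot_def by auto
  qed
qed

lemma qplus_quot: "qplus (quot al a) (quot al b) = quot al (a + b)"
proof (intro set_eqI iffI)
  fix x assume "x \<in> qplus (quot al a) (quot al b)"
  then obtain k1 k2 where "x = (a + al * k1) + (b + al * k2)" unfolding qplus_def quot_def by auto
  then have "x = (a + b) + al * (k1 + k2)" by (simp add: algebra_simps)
  then show "x \<in> quot al (a + b)" unfolding quot_def by auto
next
  fix x assume "x \<in> quot al (a + b)"
  then obtain k where "x = (a + al * k) + (b + al * 0)" unfolding quot_def by (auto simp: algebra_simps)
  then show "x \<in> qplus (quot al a) (quot al b)" unfolding qplus_def quot_def by blast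
qed

lemma qtimes_quot: "qtimes al (quot al a) (quot al b) = quot al (a * b)"
proof (intro set_eqI iffI)
  fix x assume "x \<in> qtimes al (quot al a) (quot al b)"
  then obtain k1 k2 k where "x = (a + al * k1) * (b + al * k2) + al * k" unfolding qtimes_def quot_def by auto
  then have "x = (a * b) + al * (a * k2 + k1 * b + al * k1 * k2 + k)" by (simp add: algebra_simps)
  then show "x \<in> quot al (a * b)" unfolding quot_def by auto
next
  fix x assume "x \<in> quot al (a * b)"
  then obtain k where "x = (a + al * 0) * (b + al * 0) + al * k" unfolding quot_def by auto
  then show "x \<in> qtimes al (quot al a) (quot al b)" unfolding qtimes_def quot_def by blast
qed

lemma Sbar_some: "u \<in> Sbar al \<Longrightarrow> u = quot al (SOME h. u = quot al h)"
  unfolding Sbar_def by (metis (mono_tags, lifting) rangeE someI_ex)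

lemma quot_in_Sbar [simp]: "quot al h \<in> Sbar al"
  unfolding Sbar_def by simp

lemma rho_quot:
  assumes "\<And>k. al dvd der_apply th (al * k)"
  shows "rho al th (quot al h) = quot al (der_apply th h)"
proof -
  define h' where "h' = (SOME h'. quot al h = quot al h')"
  have "quot al h = quot al h'" unfolding h'_def by (rule someI_ex) auto
  then obtain c where c: "h - h' = al * c" by (auto simp: quot_eq_iff elim: dvdE)
  have "der_apply th h' - der_apply th h = - der_apply th (al * c)"
    using c by (metis der_apply_diff der_apply_uminus minus_diff_eq)
  then have "al dvd (der_apply th h' - der_apply th h)" using assms by simp
  then show ?thesis unfolding rho_def h'_def[symmetric] by (simp add: quot_eq_iff)
qed

type_synonym R = "complex poly poly"

lemma unit_of_nat_R: "is_unit (of_nat (Suc m) :: R)"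
  by (simp add: of_nat_poly is_unit_const_poly_iff dvd_field_iff del: of_nat_Suc)

lemma der_pow:
  fixes eta :: "R \<Rightarrow> R"
  assumes em: "\<And>a b. eta (a * b) = a * eta b + b * eta a"
  shows "eta (L ^ Suc m) = of_nat (Suc m) * L ^ m * eta L"
proof (induction m)
  case 0 then show ?case by simp
next
  case (Suc m)
  have "eta (L ^ Suc (Suc m)) = eta (L * L ^ Suc m)" by simp
  also have "\<dots> = L * eta (L ^ Suc m) + L ^ Suc m * eta L" by (rule em)
  also have "\<dots> = of_nat (Suc (Suc m)) * L ^ Suc m * eta L" using Suc by (simp add: algebra_simps)
  finally show ?case .
qed

lemma mult_arg:
  fixes eta :: "R \<Rightarrow> R"
  assumes em: "\<And>a b. eta (a * b) = a * eta b + b * eta a"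
    and x0: "x \<noteq> 0" and pL: "prime_elem L" and Lx: "L dvd x" and xe: "x dvd eta x"
  shows "L dvd eta L"
proof -
  have nu: "\<not> is_unit L" using pL by (simp add: prime_elem_not_unit)
  obtain q where xq: "x = L ^ multiplicity L x * q" and nq: "\<not> L dvd q"
    using multiplicity_decompose'[OF x0 nu] by blast
  have "multiplicity L x > 0" using multiplicity_gt_zero_iff[OF x0 nu] Lx by simp
  then obtain m where m: "multiplicity L x = Suc m" by (cases "multiplicity L x") auto
  have L0: "L \<noteq> 0" using pL by auto
  have ex: "eta x = L ^ Suc m * eta q + q * (of_nat (Suc m) * L ^ m * eta L)"
    using xq m em der_pow[OF em] by simp
  have "L ^ Suc m dvd eta x" using xe xq m by (metis dvd_mult_left)
  then have "L ^ Suc m dvd q * (of_nat (Suc m) * L ^ m * eta L)"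
    using ex by (metis dvd_add_right_iff dvd_triv_left)
  then have "L ^ m * L dvd L ^ m * (q * of_nat (Suc m) * eta L)"
    by (simp add: algebra_simps power_Suc2)
  then have "L dvd q * of_nat (Suc m) * eta L" using L0 by simp
  then have "L dvd q \<or> L dvd of_nat (Suc m) \<or> L dvd eta L"
    using pL by (metis prime_elem_dvd_mult_iff)
  moreover have "\<not> L dvd of_nat (Suc m)"
    using unit_of_nat_R[of m] nu dvd_unit_imp_unit by blast
  ultimately show ?thesis using nq by blast
qed

lemma der_prod:
  fixes eta :: "R \<Rightarrow> R" and n :: nat
  assumes em: "\<And>a b. eta (a * b) = a * eta b + b * eta a"
    and e1: "eta 1 = 0"
    and h: "\<And>i. i < n \<Longrightarrow> L i dvd eta (L i)"
  shows "(\<Prod>i<n. L i) dvd eta (\<Prod>i<n. L i)"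
  using h
proof (induction n)
  case 0 then show ?case using e1 by simp
next
  case (Suc n)
  have IH: "(\<Prod>i<n. L i) dvd eta (\<Prod>i<n. L i)" using Suc by simp
  have hn: "L n dvd eta (L n)" using Suc by simp
  have "eta (\<Prod>i<Suc n. L i) = (\<Prod>i<n. L i) * eta (L n) + L n * eta (\<Prod>i<n. L i)"
    by (simp add: em)
  moreover have "(\<Prod>i<n. L i) * L n dvd (\<Prod>i<n. L i) * eta (L n)" using hn by simp
  moreover have "(\<Prod>i<n. L i) * L n dvd L n * eta (\<Prod>i<n. L i)" using IH by (simp add: mult.commute)
  ultimately show ?case by simp
qed

definition primeS :: "S \<Rightarrow> bool" where
  "primeS al \<longleftrightarrow> al \<noteq> 0 \<and> (\<forall>a b. al dvd a * b \<longrightarrow> al dvd a \<or> al dvd b)"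

lemma core_DC:
  assumes pa: "primeS al" and nd: "\<not> al dvd f" and th: "th \<in> DC (f * al)"
  shows "al dvd der_apply th al" and "f dvd der_apply th f"
    and "\<And>k. al dvd der_apply th (al * k)"
proof -
  have a0: "al \<noteq> 0" using pa by (simp add: primeS_def)
  have d: "f * al dvd f * der_apply th al + al * der_apply th f"
    using th by (simp add: DC_def der_apply_mult)
  then have "al dvd f * der_apply th al + al * der_apply th f" using dvd_mult_right by blast
  then have "al dvd f * der_apply th al" by (simp add: dvd_add_left_iff)
  then show A: "al dvd der_apply th al" using pa nd by (auto simp: primeS_def)
  then obtain r where r: "der_apply th al = al * r" by (auto elim: dvdE)
  have "f * al dvd al * (f * r + der_apply th f)" using d r by (simp add: algebra_simps)
  then have "f dvd f * r + der_apply th f" using a0 by (simp add: mult.commute)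
  then show "f dvd der_apply th f" by (simp add: dvd_add_right_iff)
  show "\<And>k. al dvd der_apply th (al * k)" using A by (simp add: der_apply_mult)
qed

lemma geo:
  fixes phi :: "S \<Rightarrow> R" and sig :: "R \<Rightarrow> S" and D :: "S \<Rightarrow> S" and n :: nat and l :: "nat \<Rightarrow> S"
  assumes padd: "\<And>a b. phi (a + b) = phi a + phi b" and pmult: "\<And>a b. phi (a * b) = phi a * phi b"
    and p1: "phi 1 = 1"
    and ker: "\<And>h. phi h = 0 \<longleftrightarrow> al dvd h" and sec: "\<And>r. phi (sig r) = r"
    and Dadd: "\<And>a b. D (a + b) = D a + D b" and Dmult: "\<And>a b. D (a * b) = a * D b + b * D a"
    and Ddiff: "\<And>a b. D (a - b) = D a - D b" and D1: "D 1 = 0"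
    and Dal: "\<And>k. al dvd D (al * k)"
    and Df: "f dvd D f" and fnz: "phi f \<noteq> 0"
    and Lp: "\<And>i. i < n \<Longrightarrow> prime_elem (phi (l i)) \<and> phi (l i) dvd phi f"
  shows "\<exists>h. al dvd (D (\<Prod>i<n. l i) - (\<Prod>i<n. l i) * h)"
proof -
  have pdiff: "phi (a - b) = phi a - phi b" for a b
    using padd[of "a - b" b] by (simp add: algebra_simps)
  have key: "phi (D (sig (phi h))) = phi (D h)" for h
  proof -
    have "phi (sig (phi h) - h) = 0" by (simp add: pdiff sec)
    then obtain c where c: "sig (phi h) - h = al * c" using ker by (auto elim: dvdE)
    have "phi (D (sig (phi h)) - D h) = 0" unfolding Ddiff[symmetric] c ker by (rule Dal)
    then show ?thesis by (simp add: pdiff)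
  qed
  define eta where "eta r = phi (D (sig r))" for r
  have eta_phi: "eta (phi h) = phi (D h)" for h using key by (simp add: eta_def)
  have eta_mult: "eta (a * b) = a * eta b + b * eta a" for a b
  proof -
    have "eta (a * b) = eta (phi (sig a * sig b))" by (simp add: pmult sec)
    also have "\<dots> = a * eta b + b * eta a" unfolding eta_phi by (simp add: Dmult padd pmult sec eta_def)
    finally show ?thesis .
  qed
  have eta1: "eta 1 = 0" using eta_phi[of 1] p1 D1 by (metis add_cancel_right_left padd)
  obtain k where k: "D f = f * k" using Df by (auto elim: dvdE)
  have fe: "phi f dvd eta (phi f)" using eta_phi[of f] k pmult by simp
  have Li: "phi (l i) dvd eta (phi (l i))" if "i < n" for i
    using mult_arg[OF eta_mult fnz _ _ fe] Lp[OF that] by blast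
  have pprod: "phi (\<Prod>i<m. l i) = (\<Prod>i<m. phi (l i))" for m
    by (induction m) (simp_all add: p1 pmult)
  have "(\<Prod>i<n. phi (l i)) dvd eta (\<Prod>i<n. phi (l i))"
    by (rule der_prod[OF eta_mult eta1 Li])
  then obtain H where H: "eta (\<Prod>i<n. phi (l i)) = (\<Prod>i<n. phi (l i)) * H" by (auto elim: dvdE)
  have "phi (D (\<Prod>i<n. l i) - (\<Prod>i<n. l i) * sig H) = 0"
    using H eta_phi[of "\<Prod>i<n. l i"] by (simp add: pdiff pmult sec pprod)
  then show ?thesis using ker by blast
qed

definition ev2 :: "R \<Rightarrow> complex \<times> complex \<Rightarrow> complex" where
  "ev2 r q = (case q of (s, t) \<Rightarrow> poly (poly r [:t:]) s)"

lemma H2: "ev2 r (x, y) = (\<Sum>j\<le>degree r. poly (coeff r j) x * y ^ j)"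
proof -
  have "poly r [:y:] = (\<Sum>j\<le>degree r. coeff r j * [:y:] ^ j)" by (rule poly_altdef)
  then have "poly (poly r [:y:]) x = (\<Sum>j\<le>degree r. poly (coeff r j * [:y:] ^ j) x)"
    by (simp add: poly_sum)
  then show ?thesis by (simp add: ev2_def)
qed

lemma H3: "eval3 f (x, y, z) = (\<Sum>k\<le>degree f. ev2 (coeff f k) (x, y) * z ^ k)"
proof -
  have "poly f [:[:z:]:] = (\<Sum>k\<le>degree f. coeff f k * [:[:z:]:] ^ k)" by (rule poly_altdef)
  then have "poly (poly (poly f [:[:z:]:]) [:y:]) x
     = (\<Sum>k\<le>degree f. poly (poly (coeff f k * [:[:z:]:] ^ k) [:y:]) x)"
    by (simp add: poly_sum)
  then show ?thesis by (simp add: ev2_def eval3_def)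
qed

lemma L1: fixes q :: "complex poly"
  assumes "\<And>i. coeff q i \<noteq> 0 \<Longrightarrow> i = e"
  shows "poly q (c * x) = c ^ e * poly q x"
proof -
  have "poly q (c * x) = (\<Sum>i\<le>degree q. coeff q i * (c * x) ^ i)" by (rule poly_altdef)
  also have "\<dots> = (\<Sum>i\<le>degree q. c ^ e * (coeff q i * x ^ i))"
    by (rule sum.cong) (auto simp: power_mult_distrib dest: assms)
  also have "\<dots> = c ^ e * poly q x" by (simp add: poly_altdef sum_distrib_left)
  finally show ?thesis .
qed

lemma L2:
  assumes "\<And>i j. coeff (coeff r j) i \<noteq> 0 \<Longrightarrow> i + j = e"
  shows "ev2 r (c * x, c * y) = c ^ e * ev2 r (x, y)"
proof -
  have "ev2 r (c * x, c * y) = (\<Sum>j\<le>degree r. poly (coeff r j) (c * x) * (c * y) ^ j)" by (rule H2)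
  also have "\<dots> = (\<Sum>j\<le>degree r. c ^ e * (poly (coeff r j) x * y ^ j))"
  proof (rule sum.cong)
    fix j assume "j \<in> {..degree r}"
    show "poly (coeff r j) (c * x) * (c * y) ^ j = c ^ e * (poly (coeff r j) x * y ^ j)"
    proof (cases "coeff r j = 0")
      case True then show ?thesis by simp
    next
      case False
      then obtain i where "coeff (coeff r j) i \<noteq> 0" by (metis leading_coeff_0_iff)
      then have je: "j \<le> e" using assms by fastforce
      have "poly (coeff r j) (c * x) = c ^ (e - j) * poly (coeff r j) x"
        by (rule L1) (use assms in fastforce)
      then have "poly (coeff r j) (c * x) * (c * y) ^ j = (c ^ (e - j) * c ^ j) * (poly (coeff r j) x * y ^ j)"
        by (simp add: power_mult_distrib algebra_simps)
      also have "c ^ (e - j) * c ^ j = c ^ e" using je by (simp add: power_add[symmetric])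
      finally show ?thesis .
    qed
  qed simp
  also have "\<dots> = c ^ e * ev2 r (x, y)" by (simp add: H2 sum_distrib_left)
  finally show ?thesis .
qed

lemma hom_scale:
  assumes "homogeneous3 d f"
  shows "eval3 f (c * x, c * y, c * z) = c ^ d * eval3 f (x, y, z)"
proof -
  have "eval3 f (c * x, c * y, c * z) = (\<Sum>k\<le>degree f. ev2 (coeff f k) (c * x, c * y) * (c * z) ^ k)" by (rule H3)
  also have "\<dots> = (\<Sum>k\<le>degree f. c ^ d * (ev2 (coeff f k) (x, y) * z ^ k))"
  proof (rule sum.cong)
    fix k assume "k \<in> {..degree f}"
    show "ev2 (coeff f k) (c * x, c * y) * (c * z) ^ k = c ^ d * (ev2 (coeff f k) (x, y) * z ^ k)"
    proof (cases "coeff f k = 0")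
      case True then show ?thesis by (simp add: ev2_def)
    next
      case False
      then obtain j where "coeff (coeff f k) j \<noteq> 0" by (metis leading_coeff_0_iff)
      then obtain i where "coeff (coeff (coeff f k) j) i \<noteq> 0" by (metis leading_coeff_0_iff)
      then have ke: "k \<le> d" using assms unfolding homogeneous3_def coeff3_def by fastforce
      have "ev2 (coeff f k) (c * x, c * y) = c ^ (d - k) * ev2 (coeff f k) (x, y)"
        by (rule L2) (use assms in \<open>fastforce simp: homogeneous3_def coeff3_def\<close>)
      then have "ev2 (coeff f k) (c * x, c * y) * (c * z) ^ k = (c ^ (d - k) * c ^ k) * (ev2 (coeff f k) (x, y) * z ^ k)"
        by (simp add: power_mult_distrib algebra_simps)
      also have "c ^ (d - k) * c ^ k = c ^ d" using ke by (simp add: power_add[symmetric])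
      finally show ?thesis .
    qed
  qed simp
  also have "\<dots> = c ^ d * eval3 f (x, y, z)" by (simp add: H3 sum_distrib_left)
  finally show ?thesis .
qed

definition lin2 :: "complex \<Rightarrow> complex \<Rightarrow> R" where
  "lin2 a b = [:[:0, a:], [:b:]:]"

lemma ev2_lin2: "ev2 (lin2 a b) (s, t) = a * s + b * t"
  by (simp add: ev2_def lin2_def algebra_simps)

lemma prime_hom:
  fixes psi :: "R \<Rightarrow> 'b::idom"
  assumes m: "\<And>a b. psi (a * b) = psi a * psi b" and one: "psi 1 \<noteq> 0"
    and k: "\<And>r. psi r = 0 \<longleftrightarrow> L dvd r" and L0: "L \<noteq> 0"
  shows "prime_elem L"
  unfolding prime_elem_def
proof (intro conjI allI impI L0)
  show "\<not> is_unit L" using k[of 1] one by simp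
next
  fix a b assume "L dvd a * b"
  then have "psi a * psi b = 0" using k m by metis
  then have "psi a = 0 \<or> psi b = 0" by simp
  then show "L dvd a \<or> L dvd b" using k by blast
qed

lemma G1: "poly (poly r c) s = poly (poly r [:poly c s:]) (s :: complex)"
  by (induction r) (simp_all add: algebra_simps)

lemma G3: "poly (poly r [:t:]) 0 = poly (map_poly (\<lambda>p. poly p (0::complex)) r) t"
  by (induction r) (simp_all add: map_poly_pCons algebra_simps poly_0_coeff_0)

lemma K2:
  assumes ab: "(a, b) \<noteq> (0, 0)"
  shows "prime_elem (lin2 a b)"
    and "\<And>r. (\<And>s t. a * s + b * t = 0 \<Longrightarrow> ev2 r (s, t) = 0) \<Longrightarrow> lin2 a b dvd r"
proof -
  have "prime_elem (lin2 a b) \<and> (\<forall>r. (\<forall>s t. a * s + b * t = 0 \<longrightarrow> ev2 r (s, t) = 0) \<longrightarrow> lin2 a b dvd r)"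
  proof (cases "b = 0")
    case False
    define c :: "complex poly" where "c = [:0, - a / b:]"
    have Le: "lin2 a b = [:-c, 1:] * [:[:b:]:]"
      using False by (simp add: lin2_def c_def)
    have u: "is_unit [:[:b:]:]" using False by (simp add: is_unit_const_poly_iff dvd_field_iff)
    have dv: "lin2 a b dvd r \<longleftrightarrow> poly r c = 0" for r
    proof -
      have "lin2 a b dvd r \<longleftrightarrow> [:-c, 1:] * [:[:b:]:] dvd r" using Le by simp
      also have "\<dots> \<longleftrightarrow> [:-c, 1:] dvd r" by (rule mult_unit_dvd_iff[OF u])
      also have "\<dots> \<longleftrightarrow> poly r c = 0" by (rule poly_eq_0_iff_dvd[symmetric])
      finally show ?thesis .
    qed
    have L0: "lin2 a b \<noteq> 0" using False by (simp add: lin2_def)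
    have pr: "prime_elem (lin2 a b)"
      by (rule prime_hom[of "\<lambda>r. poly r c"]) (simp_all add: dv L0)
    have "lin2 a b dvd r" if h: "\<forall>s t. a * s + b * t = 0 \<longrightarrow> ev2 r (s, t) = 0" for r
    proof -
      have "poly (poly r c) s = 0" for s
      proof -
        have "poly (poly r c) s = ev2 r (s, - a / b * s)" by (subst G1) (simp add: ev2_def c_def mult.commute)
        also have "\<dots> = 0" using h False by simp
        finally show ?thesis .
      qed
      then have "poly r c = 0" using poly_all_0_iff_0 by blast
      then show ?thesis using dv by simp
    qed
    then show ?thesis using pr by blast
  next
    case True
    then have a0: "a \<noteq> 0" using ab by simp
    define psi where "psi r = map_poly (\<lambda>p. poly p (0::complex)) r" for r :: R
    have Le: "lin2 a b = [:[:0, a:]:]" using True by (simp add: lin2_def)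
    have u: "is_unit [:a:]" using a0 by (simp add: is_unit_const_poly_iff dvd_field_iff)
    have e: "[:0, a:] = [:- 0, 1:] * [:a:]" by simp
    have dv: "lin2 a b dvd r \<longleftrightarrow> psi r = 0" for r
    proof -
      have "lin2 a b dvd r \<longleftrightarrow> (\<forall>n. [:0, a:] dvd coeff r n)" unfolding Le const_poly_dvd_iff ..
      also have "\<dots> \<longleftrightarrow> (\<forall>n. poly (coeff r n) 0 = 0)"
      proof -
        have "[:0, a:] dvd x \<longleftrightarrow> poly x 0 = 0" for x
        proof -
          have "[:0, a:] dvd x \<longleftrightarrow> [:-0, 1:] * [:a:] dvd x" by (simp only: e)
          also have "\<dots> \<longleftrightarrow> [:-0, 1:] dvd x" by (rule mult_unit_dvd_iff[OF u])
          also have "\<dots> \<longleftrightarrow> poly x 0 = 0" by (rule poly_eq_0_iff_dvd[symmetric])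
          finally show ?thesis .
        qed
        then show ?thesis by simp
      qed
      also have "\<dots> \<longleftrightarrow> psi r = 0"
        by (simp add: psi_def poly_eq_iff coeff_map_poly)
      finally show ?thesis .
    qed
    have pm: "psi (x * y) = psi x * psi y" for x y
      unfolding psi_def by (rule mp_mult) simp_all
    have L0: "lin2 a b \<noteq> 0" using a0 by (simp add: lin2_def)
    have pr: "prime_elem (lin2 a b)"
      by (rule prime_hom[of psi]) (simp_all add: dv L0 pm, simp add: psi_def)
    have "lin2 a b dvd r" if h: "\<forall>s t. a * s + b * t = 0 \<longrightarrow> ev2 r (s, t) = 0" for r
    proof -
      have "poly (psi r) t = 0" for t
        using h True by (simp add: psi_def G3[symmetric] ev2_def)
      then have "psi r = 0" using poly_all_0_iff_0 by blast
      then show ?thesis using dv by simp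
    qed
    then show ?thesis using pr by blast
  qed
  then show "prime_elem (lin2 a b)"
    and "\<And>r. (\<And>s t. a * s + b * t = 0 \<Longrightarrow> ev2 r (s, t) = 0) \<Longrightarrow> lin2 a b dvd r" by blast+
qed

lemma twoD:
  fixes a b p1 p2 s t :: complex
  assumes ab: "(a, b) \<noteq> (0, 0)" and p: "(p1, p2) \<noteq> (0, 0)" and e1: "a * p1 + b * p2 = 0"
    and e2: "a * s + b * t = 0"
  shows "\<exists>c. s = c * p1 \<and> t = c * p2"
proof (cases "b = 0")
  case False
  have p2: "p2 = - a * p1 / b" using e1 False by (simp add: field_simps add_eq_0_iff)
  have t: "t = - a * s / b" using e2 False by (simp add: field_simps add_eq_0_iff)
  have p1: "p1 \<noteq> 0" using p p2 by auto
  show ?thesis using p1 False by (intro exI[of _ "s / p1"]) (simp add: p2 t field_simps)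
next
  case True
  then have a: "a \<noteq> 0" using ab by simp
  then have "p1 = 0" "s = 0" using e1 e2 True by auto
  then have "p2 \<noteq> 0" using p by auto
  then show ?thesis using \<open>s = 0\<close> \<open>p1 = 0\<close> by (intro exI[of _ "t / p2"]) simp
qed

lemma Lprop:
  fixes phi :: "S \<Rightarrow> R" and pi :: "complex \<times> complex \<Rightarrow> complex \<times> complex \<times> complex"
  assumes ker: "\<And>h. phi h = 0 \<longleftrightarrow> al dvd h"
    and ev: "\<And>h s t. ev2 (phi h) (s, t) = eval3 h (pi (s, t))"
    and pis: "\<And>c s t. pi (c * s, c * t) = (case pi (s, t) of (x, y, z) \<Rightarrow> (c * x, c * y, c * z))"
    and surj: "\<And>p. eval3 al p = 0 \<Longrightarrow> \<exists>s t. pi (s, t) = p"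
    and lin: "\<And>w. \<exists>a b. phi (linear_form w) = lin2 a b"
    and hom: "homogeneous3 d f" and fp: "eval3 f p = 0" and ap: "eval3 al p = 0" and p0: "nonzero3 p"
    and lp: "eval3 (linear_form w) p = 0" and nd: "\<not> al dvd linear_form w"
  shows "prime_elem (phi (linear_form w)) \<and> phi (linear_form w) dvd phi f"
proof -
  obtain a b where ab: "phi (linear_form w) = lin2 a b" using lin by blast
  have abn: "(a, b) \<noteq> (0, 0)"
  proof
    assume "(a, b) = (0, 0)"
    then have "phi (linear_form w) = 0" using ab by (simp add: lin2_def)
    then show False using ker nd by simp
  qed
  obtain p1 p2 where pp: "pi (p1, p2) = p" using surj[OF ap] by blast
  have pn: "(p1, p2) \<noteq> (0, 0)"
  proof
    assume h: "(p1, p2) = (0, 0)"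
    have "pi (0 * 0, 0 * 0) = (case pi (0, 0) of (x, y, z) \<Rightarrow> (0 * x, 0 * y, 0 * z))" by (rule pis)
    then have "p = (0, 0, 0)" using h pp by (auto split: prod.splits)
    then show False using p0 by (simp add: nonzero3_def)
  qed
  have e1: "a * p1 + b * p2 = 0"
    using ev[of "linear_form w" p1 p2] ab pp lp by (simp add: ev2_lin2)
  have "lin2 a b dvd phi f"
  proof (rule K2(2)[OF abn])
    fix s t assume "a * s + b * t = 0"
    then obtain c where c: "s = c * p1" "t = c * p2" using twoD[OF abn pn e1] by blast
    obtain x y z where pxyz: "p = (x, y, z)" by (cases p) auto
    have "ev2 (phi f) (s, t) = eval3 f (pi (c * p1, c * p2))" using ev c by simp
    also have "\<dots> = eval3 f (c * x, c * y, c * z)" using pis[of c p1 p2] pp pxyz by simp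
    also have "\<dots> = c ^ d * eval3 f (x, y, z)" by (rule hom_scale[OF hom])
    also have "\<dots> = 0" using fp pxyz by simp
    finally show "ev2 (phi f) (s, t) = 0" .
  qed
  then show ?thesis using K2(1)[OF abn] ab by simp
qed

definition good :: "S \<Rightarrow> (S \<Rightarrow> R) \<Rightarrow> (R \<Rightarrow> S) \<Rightarrow> (complex \<times> complex \<Rightarrow> complex \<times> complex \<times> complex) \<Rightarrow> bool" where
  "good al phi sig pm \<longleftrightarrow>
     (\<forall>a b. phi (a + b) = phi a + phi b) \<and> (\<forall>a b. phi (a * b) = phi a * phi b) \<and> phi 1 = 1
   \<and> (\<forall>h. phi h = 0 \<longleftrightarrow> al dvd h) \<and> (\<forall>r. phi (sig r) = r)
   \<and> (\<forall>h s t. ev2 (phi h) (s, t) = eval3 h (pm (s, t)))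
   \<and> (\<forall>c s t. pm (c * s, c * t) = (case pm (s, t) of (x, y, z) \<Rightarrow> (c * x, c * y, c * z)))
   \<and> (\<forall>p. eval3 al p = 0 \<longrightarrow> (\<exists>s t. pm (s, t) = p))
   \<and> (\<forall>w. \<exists>a b. phi (linear_form w) = lin2 a b)"

lemma eval3_lf: "eval3 (linear_form (a, b, c)) (x, y, z) = a * x + b * y + c * z"
  by (simp add: eval3_def linear_form_def const3_def varX_def varY_def varZ_def)

lemma lf_nz: "nonzero3 v \<Longrightarrow> linear_form v \<noteq> 0"
proof
  assume n: "nonzero3 v" and z: "linear_form v = 0"
  obtain a b c where v: "v = (a, b, c)" by (cases v) auto
  have "eval3 (linear_form v) (1, 0, 0) = 0" "eval3 (linear_form v) (0, 1, 0) = 0" "eval3 (linear_form v) (0, 0, 1) = 0"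
    using z by (simp_all add: eval3_def)
  then have "a = 0" "b = 0" "c = 0" using v by (simp_all add: eval3_lf)
  then show False using n v by (simp add: nonzero3_def)
qed

lemma lf_expand: "linear_form (a, b, c) = [: [:[:0, a:], [:b:]:], [:[:c:]:] :]"
  by (simp add: linear_form_def const3_def varX_def varY_def varZ_def)

lemma hom_ev:
  assumes f0: "f 0 = 0" and fa: "\<And>a b. f (a + b) = f a + f b" and fm: "\<And>a b. f (a * b) = f a * f b"
  shows "poly (map_poly f h) (f C) = f (poly h C)"
  by (induction h) (simp_all add: map_poly_pCons f0 fa fm)

lemma G4: "poly (poly (poly h c) [:t:]) s = poly (poly (poly h [:[:ev2 c (s, t):]:]) [:t:]) (s::complex)"
  by (induction h) (simp_all add: ev2_def algebra_simps)

lemma goodA: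
  assumes v3: "v3 \<noteq> 0"
  shows "good (linear_form (v1, v2, v3)) (\<lambda>h. poly h [:[:0, - v1 / v3:], [:- v2 / v3:]:]) (\<lambda>r. [:r:])
     (\<lambda>(s, t). (s, t, - (v1 * s + v2 * t) / v3))"
proof -
  define c0 :: R where "c0 = [:[:0, - v1 / v3:], [:- v2 / v3:]:]"
  have le: "linear_form (v1, v2, v3) = [:-c0, 1:] * [:[:[:v3:]:]:]"
    using v3 by (simp add: lf_expand c0_def)
  have u: "is_unit [:[:[:v3:]:]:]" using v3 by (simp add: is_unit_const_poly_iff dvd_field_iff)
  have ker: "poly h c0 = 0 \<longleftrightarrow> linear_form (v1, v2, v3) dvd h" for h
  proof -
    have "linear_form (v1, v2, v3) dvd h \<longleftrightarrow> [:-c0, 1:] * [:[:[:v3:]:]:] dvd h" using le by simp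
    also have "\<dots> \<longleftrightarrow> [:-c0, 1:] dvd h" by (rule mult_unit_dvd_iff[OF u])
    also have "\<dots> \<longleftrightarrow> poly h c0 = 0" by (rule poly_eq_0_iff_dvd[symmetric])
    finally show ?thesis by simp
  qed
  have ev: "ev2 (poly h c0) (s, t) = eval3 h (s, t, - (v1 * s + v2 * t) / v3)" for h s t
  proof -
    have "ev2 (poly h c0) (s, t) = poly (poly (poly h [:[:ev2 c0 (s, t):]:]) [:t:]) s"
      using G4[of h c0 t s] by (simp only: ev2_def prod.case)
    also have "ev2 c0 (s, t) = - (v1 * s + v2 * t) / v3" using v3 by (simp add: c0_def ev2_def field_simps)
    finally show ?thesis by (simp add: eval3_def)
  qed
  have lin: "\<exists>a b. poly (linear_form w) c0 = lin2 a b" for w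
  proof -
    obtain w1 w2 w3 where w: "w = (w1, w2, w3)" by (cases w) auto
    show ?thesis
      by (rule exI[of _ "w1 - w3 * v1 / v3"], rule exI[of _ "w2 - w3 * v2 / v3"])
        (simp add: w lf_expand c0_def lin2_def)
  qed
  have surj: "\<exists>s t. (\<lambda>(s, t). (s, t, - (v1 * s + v2 * t) / v3)) (s, t) = p"
    if "eval3 (linear_form (v1, v2, v3)) p = 0" for p
  proof -
    obtain x y z where p: "p = (x, y, z)" by (cases p) auto
    have "z = - (v1 * x + v2 * y) / v3" using that v3 by (simp add: p eval3_lf field_simps add_eq_0_iff)
    then show ?thesis using p by auto
  qed
  show ?thesis unfolding good_def c0_def[symmetric]
    apply (intro conjI allI impI)
    subgoal by simp
    subgoal by simp
    subgoal by simp
    subgoal using ker by simp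
    subgoal by simp
    subgoal using ev by simp
    subgoal by (simp add: algebra_simps)
    subgoal using surj by simp
    subgoal using lin by simp
    done
qed

lemma goodB:
  assumes v2: "v2 \<noteq> 0"
  shows "good (linear_form (v1, v2, 0)) (\<lambda>h. map_poly (\<lambda>a. poly a [:0, - v1 / v2:]) h) (\<lambda>r. map_poly (\<lambda>b. [:b:]) r)
     (\<lambda>(s, t). (s, - v1 / v2 * s, t))"
proof -
  define c1 :: "complex poly" where "c1 = [:0, - v1 / v2:]"
  define f where "f a = poly a c1" for a :: R
  have f0: "f 0 = 0" and fa: "\<And>a b. f (a + b) = f a + f b" and fm: "\<And>a b. f (a * b) = f a * f b"
    by (simp_all add: f_def)
  have le: "linear_form (v1, v2, 0) = [:[:-c1, 1:] * [:[:v2:]:]:]"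
    using v2 by (simp add: lf_expand c1_def)
  have u: "is_unit [:[:v2:]:]" using v2 by (simp add: is_unit_const_poly_iff dvd_field_iff)
  have kA: "[:-c1, 1:] * [:[:v2:]:] dvd a \<longleftrightarrow> f a = 0" for a
  proof -
    have "[:-c1, 1:] * [:[:v2:]:] dvd a \<longleftrightarrow> [:-c1, 1:] dvd a" by (rule mult_unit_dvd_iff[OF u])
    also have "\<dots> \<longleftrightarrow> f a = 0" unfolding f_def by (rule poly_eq_0_iff_dvd[symmetric])
    finally show ?thesis .
  qed
  have ker: "map_poly f h = 0 \<longleftrightarrow> linear_form (v1, v2, 0) dvd h" for h
  proof -
    have "linear_form (v1, v2, 0) dvd h \<longleftrightarrow> (\<forall>n. [:-c1, 1:] * [:[:v2:]:] dvd coeff h n)"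
      unfolding le const_poly_dvd_iff ..
    also have "\<dots> \<longleftrightarrow> (\<forall>n. f (coeff h n) = 0)" using kA by simp
    also have "\<dots> \<longleftrightarrow> map_poly f h = 0" by (simp add: poly_eq_iff coeff_map_poly f0)
    finally show ?thesis by simp
  qed
  have ev: "ev2 (map_poly f h) (s, t) = eval3 h (s, - v1 / v2 * s, t)" for h s t
  proof -
    have ft: "f [:[:t:]:] = [:t:]" by (simp add: f_def)
    have "poly (map_poly f h) [:t:] = f (poly h [:[:t:]:])"
      using hom_ev[of f h "[:[:t:]:]", OF f0 fa fm] ft by simp
    then have "ev2 (map_poly f h) (s, t) = poly (poly (poly h [:[:t:]:]) c1) s"
      by (simp add: ev2_def f_def)
    also have "\<dots> = poly (poly (poly h [:[:t:]:]) [:poly c1 s:]) s" by (rule G1)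
    finally show ?thesis by (simp add: eval3_def c1_def mult.commute)
  qed
  have sec: "map_poly f (map_poly (\<lambda>b. [:b:]) r) = r" for r
    by (simp add: map_poly_map_poly f0 o_def f_def)
  have lin: "\<exists>a b. map_poly f (linear_form w) = lin2 a b" for w
  proof -
    obtain w1 w2 w3 where w: "w = (w1, w2, w3)" by (cases w) auto
    show ?thesis
      by (rule exI[of _ "w1 - w2 * v1 / v2"], rule exI[of _ "w3"])
        (simp add: w lf_expand c1_def lin2_def map_poly_pCons f0 f_def)
  qed
  have surj: "\<exists>s t. (\<lambda>(s, t). (s, - v1 / v2 * s, t)) (s, t) = p"
    if "eval3 (linear_form (v1, v2, 0)) p = 0" for p
  proof -
    obtain x y z where p: "p = (x, y, z)" by (cases p) auto
    have "y = - v1 / v2 * x" using that v2 by (simp add: p eval3_lf field_simps add_eq_0_iff)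
    then show ?thesis using p by auto
  qed
  show ?thesis unfolding good_def c1_def[symmetric] f_def[symmetric]
    apply (intro conjI allI impI)
    subgoal by (rule mp_add[OF f0 fa])
    subgoal by (rule mp_mult[OF f0 fa fm])
    subgoal by (simp add: f_def)
    subgoal using ker by simp
    subgoal using sec by simp
    subgoal using ev by simp
    subgoal by (simp add: algebra_simps)
    subgoal using surj by simp
    subgoal using lin by simp
    done
qed

lemma goodC:
  assumes v1: "v1 \<noteq> 0"
  shows "good (linear_form (v1, 0, 0)) (\<lambda>h. map_poly (map_poly (\<lambda>b. poly b 0)) h)
     (\<lambda>r. map_poly (map_poly (\<lambda>b. [:b:])) r) (\<lambda>(s, t). (0, s, t))"
proof -
  define g where "g b = poly b (0::complex)" for b :: "complex poly"
  define f where "f a = map_poly g a" for a :: R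
  have gd: "g = (\<lambda>b. poly b 0)" by (rule ext) (simp add: g_def)
  have g0: "g 0 = 0" and ga: "\<And>a b. g (a + b) = g a + g b" and gm: "\<And>a b. g (a * b) = g a * g b"
    by (simp_all add: g_def)
  have f0: "f 0 = 0" and fa: "\<And>a b. f (a + b) = f a + f b" and fm: "\<And>a b. f (a * b) = f a * f b"
    unfolding f_def by (simp, rule mp_add[OF g0 ga], rule mp_mult[OF g0 ga gm])
  have le: "linear_form (v1, 0, 0) = [:[:[:0, 1:] * [:v1:]:]:]"
    by (simp add: lf_expand)
  have u: "is_unit [:v1:]" using v1 by (simp add: is_unit_const_poly_iff dvd_field_iff)
  have kA: "[:0, 1:] * [:v1:] dvd a \<longleftrightarrow> g a = 0" for a
  proof -
    have "[:0, 1:] * [:v1:] dvd a \<longleftrightarrow> [:-0, 1:] dvd a" by (simp only: mult_unit_dvd_iff[OF u] minus_zero)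
    also have "\<dots> \<longleftrightarrow> g a = 0" unfolding g_def by (rule poly_eq_0_iff_dvd[symmetric])
    finally show ?thesis .
  qed
  have ker: "map_poly f h = 0 \<longleftrightarrow> linear_form (v1, 0, 0) dvd h" for h
  proof -
    have "linear_form (v1, 0, 0) dvd h \<longleftrightarrow> (\<forall>n. [:[:0, 1:] * [:v1:]:] dvd coeff h n)"
      unfolding le const_poly_dvd_iff ..
    also have "\<dots> \<longleftrightarrow> (\<forall>n m. [:0, 1:] * [:v1:] dvd coeff (coeff h n) m)"
      unfolding const_poly_dvd_iff ..
    also have "\<dots> \<longleftrightarrow> (\<forall>n m. g (coeff (coeff h n) m) = 0)" using kA by simp
    also have "\<dots> \<longleftrightarrow> map_poly f h = 0" by (simp add: poly_eq_iff coeff_map_poly f0 g0 f_def)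
    finally show ?thesis by simp
  qed
  have ev: "ev2 (map_poly f h) (s, t) = eval3 h (0, s, t)" for h s t
  proof -
    have ft: "f [:[:t:]:] = [:t:]" by (simp add: f_def g_def map_poly_pCons)
    have "poly (map_poly f h) [:t:] = f (poly h [:[:t:]:])"
      using hom_ev[of f h "[:[:t:]:]", OF f0 fa fm] ft by simp
    then have "ev2 (map_poly f h) (s, t) = poly (map_poly (\<lambda>p. poly p 0) (poly h [:[:t:]:])) s"
      using gd by (simp add: ev2_def f_def)
    also have "\<dots> = poly (poly (poly h [:[:t:]:]) [:s:]) 0" by (rule G3[symmetric])
    finally show ?thesis by (simp add: eval3_def)
  qed
  have sec: "map_poly f (map_poly (map_poly (\<lambda>b. [:b:])) r) = r" for r
  proof -
    have "map_poly f (map_poly (map_poly (\<lambda>b. [:b:])) r) = map_poly (f \<circ> map_poly (\<lambda>b. [:b:])) r"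
      by (rule map_poly_map_poly) (simp_all add: f0)
    also have "f \<circ> map_poly (\<lambda>b. [:b:]) = (\<lambda>x. x)"
    proof
      fix x :: "complex poly"
      show "(f \<circ> map_poly (\<lambda>b. [:b:])) x = x"
        by (simp add: f_def g_def map_poly_map_poly o_def)
    qed
    finally show ?thesis by simp
  qed
  have lin: "\<exists>a b. map_poly f (linear_form w) = lin2 a b" for w
  proof -
    obtain w1 w2 w3 where w: "w = (w1, w2, w3)" by (cases w) auto
    show ?thesis
      by (rule exI[of _ "w2"], rule exI[of _ "w3"])
        (simp add: w lf_expand lin2_def map_poly_pCons f0 g0 f_def g_def)
  qed
  have surj: "\<exists>s t. (\<lambda>(s, t). (0, s, t)) (s, t) = p"
    if "eval3 (linear_form (v1, 0, 0)) p = 0" for p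
  proof -
    obtain x y z where p: "p = (x, y, z)" by (cases p) auto
    have "x = 0" using that v1 by (simp add: p eval3_lf)
    then show ?thesis using p by auto
  qed
  show ?thesis unfolding good_def g_def[symmetric] f_def[symmetric]
    apply (intro conjI allI impI)
    subgoal by (rule mp_add[OF f0 fa])
    subgoal by (rule mp_mult[OF f0 fa fm])
    subgoal by (simp add: f_def g_def)
    subgoal using ker by simp
    subgoal using sec by simp
    subgoal using ev by simp
    subgoal by simp
    subgoal using surj by simp
    subgoal using lin by simp
    done
qed

lemma good_exists: "nonzero3 v \<Longrightarrow> \<exists>phi sig pm. good (linear_form v) phi sig pm"
proof -
  assume n: "nonzero3 v"
  obtain v1 v2 v3 where v: "v = (v1, v2, v3)" by (cases v) auto
  show ?thesis
  proof (cases "v3 = 0")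
    case False then show ?thesis using goodA[OF False, of v1 v2] v by blast
  next
    case v3: True
    show ?thesis
    proof (cases "v2 = 0")
      case False then show ?thesis using goodB[OF False, of v1] v v3 by blast
    next
      case True
      then have "v1 \<noteq> 0" using n v v3 by (simp add: nonzero3_def)
      then show ?thesis using goodC[of v1] v v3 True by blast
    qed
  qed
qed

lemma der_apply_1: "der_apply th 1 = 0"
  using der_apply_mult[of th 1 1] by simp

theorem proposition2p10:
  fixes f' :: S and v :: "complex \<times> complex \<times> complex" and g :: S
  assumes "reduced_curve_eq f'"
    and "nonzero3 v"
    and "\<not> linear_form v dvd f'"
    and "reduced_eq_of_intersection (linear_form v) f' g"
  shows "(\<forall>\<theta>\<in>DC f'. der_smult (linear_form v) \<theta> \<in> DC (f' * linear_form v))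
    \<and> inj_on (der_smult (linear_form v)) (DC f')
    \<and> (\<forall>\<theta>\<in>DC (f' * linear_form v). rho (linear_form v) \<theta> \<in> DCpp (linear_form v) g)
    \<and> (\<forall>\<theta>\<in>DC (f' * linear_form v). \<forall>\<theta>'\<in>DC (f' * linear_form v).
          \<forall>u\<in>Sbar (linear_form v). rho (linear_form v) (der_add \<theta> \<theta>') u
             = qplus (rho (linear_form v) \<theta> u) (rho (linear_form v) \<theta>' u))
    \<and> (\<forall>s. \<forall>\<theta>\<in>DC (f' * linear_form v). \<forall>u\<in>Sbar (linear_form v).
          rho (linear_form v) (der_smult s \<theta>) u
             = qtimes (linear_form v) (quot (linear_form v) s) (rho (linear_form v) \<theta> u))
    \<and> (\<forall>\<theta>\<in>DC (f' * linear_form v).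
          (\<forall>u\<in>Sbar (linear_form v). rho (linear_form v) \<theta> u = quot (linear_form v) 0)
          \<longleftrightarrow> (\<exists>\<theta>'\<in>DC f'. \<theta> = der_smult (linear_form v) \<theta>'))"
proof -
  define al where "al = linear_form v"
  obtain phi sig pm where gd: "good al phi sig pm" using good_exists[OF assms(2)] al_def by blast
  have padd: "\<And>a b. phi (a + b) = phi a + phi b" and pmult: "\<And>a b. phi (a * b) = phi a * phi b"
    and p1: "phi 1 = 1" and ker: "\<And>h. phi h = 0 \<longleftrightarrow> al dvd h" and sec: "\<And>r. phi (sig r) = r"
    and ev: "\<And>h s t. ev2 (phi h) (s, t) = eval3 h (pm (s, t))"
    and pis: "\<And>c s t. pm (c * s, c * t) = (case pm (s, t) of (x, y, z) \<Rightarrow> (c * x, c * y, c * z))"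
    and surj: "\<And>p. eval3 al p = 0 \<Longrightarrow> \<exists>s t. pm (s, t) = p"
    and lin: "\<And>w. \<exists>a b. phi (linear_form w) = lin2 a b"
    using gd unfolding good_def by blast+
  have f0: "f' \<noteq> 0" and hom: "\<exists>d. homogeneous3 d f'" using assms(1) by (auto simp: reduced_curve_eq_def)
  obtain d where hom: "homogeneous3 d f'" using hom by blast
  have nd: "\<not> al dvd f'" using assms(3) al_def by simp
  have a0: "al \<noteq> 0" using lf_nz[OF assms(2)] al_def by simp
  have pS: "primeS al" unfolding primeS_def
  proof (intro conjI allI impI a0)
    fix a b assume "al dvd a * b"
    then have "phi a * phi b = 0" using ker pmult by metis
    then have "phi a = 0 \<or> phi b = 0" by simp
    then show "al dvd a \<or> al dvd b" using ker by blast
  qed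
  have canc: "f dvd X" if "f * al dvd al * X" for f X
    using that a0 by (simp add: mult.commute)
  have P1: "\<forall>\<theta>\<in>DC f'. der_smult al \<theta> \<in> DC (f' * al)"
  proof
    fix th assume "th \<in> DC f'"
    then obtain k where k: "der_apply th f' = f' * k" by (auto simp: DC_def elim: dvdE)
    have "der_apply (der_smult al th) (f' * al) = f' * al * (der_apply th al + al * k)"
      by (simp add: der_apply_smult der_apply_mult k algebra_simps)
    then show "der_smult al th \<in> DC (f' * al)" by (simp add: DC_def)
  qed
  have P2: "inj_on (der_smult al) (DC f')"
  proof (rule inj_onI)
    fix x y assume "der_smult al x = der_smult al y"
    then show "x = y" using a0 by (cases x, cases y) (simp add: der_smult_def)
  qed
  have Dal: "\<And>k. al dvd der_apply th (al * k)" if "th \<in> DC (f' * al)" for th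
    using core_DC(3)[OF pS nd that] .
  obtain ps ls where rei:
      "length ls = length ps"
      "\<forall>i<length ps. nonzero3 (ps ! i) \<and> eval3 al (ps ! i) = 0 \<and> eval3 f' (ps ! i) = 0"
      "\<forall>i<length ps. \<not> al dvd linear_form (ls ! i) \<and> eval3 (linear_form (ls ! i)) (ps ! i) = 0"
      "g = (\<Prod>i<length ps. linear_form (ls ! i))"
    using assms(4) unfolding reduced_eq_of_intersection_def al_def by blast
  have P3: "\<forall>\<theta>\<in>DC (f' * al). rho al \<theta> \<in> DCpp al g"
  proof
    fix th assume th: "th \<in> DC (f' * al)"
    note rq = rho_quot[OF Dal[OF th]]
    have ex: "\<exists>h. al dvd (der_apply th (\<Prod>i<length ps. linear_form (ls ! i)) - (\<Prod>i<length ps. linear_form (ls ! i)) * h)"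
    proof (rule geo[where phi = phi and sig = sig and f = f'])
      show "phi f' \<noteq> 0" using ker nd by simp
      show "f' dvd der_apply th f'" using core_DC(2)[OF pS nd th] .
      fix i assume "i < length ps"
      then show "prime_elem (phi (linear_form (ls ! i))) \<and> phi (linear_form (ls ! i)) dvd phi f'"
        using Lprop[where phi = phi and pi = pm and al = al, OF ker ev pis surj lin hom] rei by blast
    qed (use padd pmult p1 ker sec der_apply_add der_apply_mult der_apply_diff der_apply_1 Dal[OF th] in auto)
    then obtain h where h: "al dvd der_apply th g - g * h" using rei(4) by blast
    have "rho al th (quot al g) = quot al (g * h)" using h by (simp add: rq quot_eq_iff)
    moreover have "rho al th \<in> DerSbar al"
      unfolding DerSbar_def
    proof (intro CollectI conjI ballI allI)
      fix u assume "u \<in> Sbar al" then show "rho al th u \<in> Sbar al" by (simp add: rho_def)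
    next
      fix u w assume "u \<in> Sbar al" "w \<in> Sbar al"
      then obtain a b where "u = quot al a" "w = quot al b" by (auto simp: Sbar_def)
      then show "rho al th (qplus u w) = qplus (rho al th u) (rho al th w)"
        and "rho al th (qtimes al u w) = qplus (qtimes al u (rho al th w)) (qtimes al (rho al th u) w)"
        by (simp_all add: qplus_quot qtimes_quot rq der_apply_add der_apply_mult mult.commute)
    next
      fix c show "rho al th (quot al (const3 c)) = quot al 0" by (simp add: rq der_apply_const)
    qed
    ultimately show "rho al th \<in> DCpp al g" unfolding DCpp_def by blast
  qed
  have P4: "\<forall>\<theta>\<in>DC (f' * al). \<forall>\<theta>'\<in>DC (f' * al). \<forall>u\<in>Sbar al.
      rho al (der_add \<theta> \<theta>') u = qplus (rho al \<theta> u) (rho al \<theta>' u)"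
    by (simp add: rho_def der_apply_dadd qplus_quot)
  have P5: "\<forall>s. \<forall>\<theta>\<in>DC (f' * al). \<forall>u\<in>Sbar al.
      rho al (der_smult s \<theta>) u = qtimes al (quot al s) (rho al \<theta> u)"
    by (simp add: rho_def der_apply_smult qtimes_quot)
  have P6: "\<forall>\<theta>\<in>DC (f' * al). (\<forall>u\<in>Sbar al. rho al \<theta> u = quot al 0)
      \<longleftrightarrow> (\<exists>\<theta>'\<in>DC f'. \<theta> = der_smult al \<theta>')"
  proof (rule ballI, rule iffI)
    fix th assume th: "th \<in> DC (f' * al)"
    assume z: "\<forall>u\<in>Sbar al. rho al th u = quot al 0"
    note rq = rho_quot[OF Dal[OF th]]
    obtain a b c where abc: "th = (a, b, c)" by (cases th) auto
    have "quot al a = quot al 0" using z[rule_format, of "quot al varX"] rq[of varX] der_apply_X[of th] abc by simp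
    then obtain a' where a': "a = al * a'" by (auto simp: quot_eq_iff elim: dvdE)
    have "quot al b = quot al 0" using z[rule_format, of "quot al varY"] rq[of varY] der_apply_Y[of th] abc by simp
    then obtain b' where b': "b = al * b'" by (auto simp: quot_eq_iff elim: dvdE)
    have "quot al c = quot al 0" using z[rule_format, of "quot al varZ"] rq[of varZ] der_apply_Z[of th] abc by simp
    then obtain c' where c': "c = al * c'" by (auto simp: quot_eq_iff elim: dvdE)
    define th' where "th' = (a', b', c')"
    have te: "th = der_smult al th'" by (simp add: abc a' b' c' th'_def der_smult_def)
    have "der_apply th (f' * al) = al * (f' * der_apply th' al + al * der_apply th' f')"
      using te by (simp add: der_apply_smult der_apply_mult algebra_simps)
    then have "f' * al dvd al * (f' * der_apply th' al + al * der_apply th' f')"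
      using th by (simp add: DC_def)
    then have "f' dvd f' * der_apply th' al + al * der_apply th' f'" by (rule canc)
    then have "f' dvd al * der_apply th' f'" by (simp add: dvd_add_right_iff)
    then obtain Y where Y: "al * der_apply th' f' = f' * Y" by (auto elim: dvdE)
    then have "al dvd f' * Y" by (metis dvd_triv_left)
    then have "al dvd Y" using pS nd by (auto simp: primeS_def)
    then obtain Y' where "Y = al * Y'" by (auto elim: dvdE)
    then have "der_apply th' f' = f' * Y'" using Y a0 by (simp add: algebra_simps)
    then have "th' \<in> DC f'" by (simp add: DC_def)
    then show "\<exists>\<theta>'\<in>DC f'. th = der_smult al \<theta>'" using te by blast
  next
    fix th assume "th \<in> DC (f' * al)"
    assume "\<exists>\<theta>'\<in>DC f'. th = der_smult al \<theta>'"
    then obtain th' where "th = der_smult al th'" by blast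
    then show "\<forall>u\<in>Sbar al. rho al th u = quot al 0"
      by (simp add: rho_def der_apply_smult quot_eq_iff)
  qed
  show ?thesis using P1 P2 P3 P4 P5 P6 by (simp add: al_def[symmetric])
qed

end
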